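(* For any integers $n,m\geq 1$, the order of $1+q^m$ in $(q;q)_n=\prod_{i=1}^n(1-q^i)$ is $\lfloor n/2m\rfloor$; that is, $(1+q^m)^{\lfloor n/2m\rfloor}$ divides $(q;q)_n$ and $(1+q^m)^{\lfloor n/2m\rfloor+1}$ does not divide $(q;q)_n$. *)

theory Defs
  imports "HOL-Computational_Algebra.Polynomial"
begin

definition qpoch :: "nat \<Rightarrow> int poly" where
  "qpoch n = (\<Prod>i=1..n. 1 - monom 1 i)"

end

theory Submission
  imports Defs Complex_Main
begin

abbreviation ci :: "int poly \<Rightarrow> complex poly" where "ci \<equiv> map_poly of_int"

lemma ci_mult: "ci (p * q) = ci p * ci q"
  by (rule poly_eqI) (simp add: coeff_map_poly coeff_mult)

lemma ci_add: "ci (p + q) = ci p + ci q"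
  by (rule poly_eqI) (simp add: coeff_map_poly)

lemma ci_diff: "ci (p - q) = ci p - ci q"
  by (rule poly_eqI) (simp add: coeff_map_poly)

lemma ci_one: "ci 1 = 1" by simp

lemma ci_monom: "ci (monom 1 i) = monom 1 i"
  by (simp add: map_poly_monom)

lemma ci_power: "ci (p ^ k) = ci p ^ k"
  by (induction k) (simp_all add: ci_mult)

lemma ci_dvd: "p dvd q \<Longrightarrow> ci p dvd ci q"
  by (metis ci_mult dvd_def)

definition Qc :: "nat \<Rightarrow> complex poly" where
  "Qc n = (\<Prod>i=1..n. 1 - monom 1 i)"

lemma qpoch_Suc: "qpoch (Suc n) = qpoch n * (1 - monom 1 (Suc n))"
  unfolding qpoch_def by (simp add: prod.nat_ivl_Suc')

lemma Qc_Suc: "Qc (Suc n) = Qc n * (1 - monom 1 (Suc n))"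
  unfolding Qc_def by (simp add: prod.nat_ivl_Suc')

lemma ci_qpoch: "ci (qpoch n) = Qc n"
proof (induction n)
  case 0 then show ?case by (simp add: qpoch_def Qc_def)
next
  case (Suc n) then show ?case
    by (simp add: qpoch_Suc Qc_Suc ci_mult ci_diff ci_monom)
qed

lemma factor_nz: "i \<ge> 1 \<Longrightarrow> (1 - monom (1::complex) i) \<noteq> 0"
proof
  assume "i \<ge> 1" "1 - monom (1::complex) i = 0"
  then have "coeff (1 - monom (1::complex) i) 0 = 0" by simp
  with \<open>i \<ge> 1\<close> show False by (simp add: coeff_monom)
qed

lemma Qc_nz: "Qc n \<noteq> 0"
proof (induction n)
  case 0 then show ?case by (simp add: Qc_def)
next
  case (Suc n) then show ?case using factor_nz[of "Suc n"] by (simp add: Qc_Suc)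
qed

lemma zeta_pow_1:
  fixes m i :: nat
  assumes "m \<ge> 1"
  shows "cis (pi / m) ^ i = 1 \<longleftrightarrow> 2 * m dvd i"
proof
  assume h: "cis (pi / m) ^ i = 1"
  then have "cis (real i * (pi / m)) = 1" by (simp add: DeMoivre)
  then have "Re (cis (real i * (pi / m))) = Re 1" by simp
  then have "cos (real i * (pi / m)) = 1" by simp
  then obtain k :: int where k: "real i * (pi / m) = real_of_int k * 2 * pi" using cos_one_2pi_int by blast
  then have "real i = real_of_int k * 2 * m" using assms by (simp add: field_simps)
  then have "int i = k * 2 * int m" by (metis of_int_eq_iff of_int_mult of_int_of_nat_eq of_int_numeral)
  then have "int i = int (2 * m) * k" by simp
  then have "int (2 * m) dvd int i" by (rule dvdI)
  then show "2 * m dvd i" by (simp only: of_nat_dvd_iff)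
next
  assume "2 * m dvd i"
  then obtain k where "i = 2 * m * k" by blast
  then have "real i * (pi / m) = 2 * pi * real k" using assms by (simp add: field_simps)
  then show "cis (pi / m) ^ i = 1" by (simp add: DeMoivre)
qed

lemma order_factor:
  fixes m i :: nat
  assumes "m \<ge> 1" "i \<ge> 1"
  shows "order (cis (pi / m)) (1 - monom 1 i) \<le> (if 2 * m dvd i then 1 else 0)"
proof (cases "2 * m dvd i")
  case False
  then have "poly (1 - monom 1 i) (cis (pi / m)) \<noteq> 0"
    using zeta_pow_1[OF assms(1)] by (simp add: poly_monom)
  then have "order (cis (pi / m)) (1 - monom 1 i) = 0" by (rule order_0I)
  then show ?thesis by simp
next
  case True
  let ?z = "cis (pi / m)"
  have p0: "poly (1 - monom 1 i) ?z = 0"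
    using zeta_pow_1[OF assms(1)] True by (simp add: poly_monom)
  have "poly (pderiv (1 - monom 1 i)) ?z \<noteq> 0"
    using assms(2) by (simp add: pderiv_diff pderiv_monom poly_monom)
  then have "order ?z (pderiv (1 - monom 1 i)) = 0" by (rule order_0I)
  then show ?thesis using order_pderiv[OF factor_nz[OF assms(2)] p0] True by simp
qed

lemma order_Qc:
  fixes m n :: nat
  assumes "m \<ge> 1"
  shows "order (cis (pi / m)) (Qc n) \<le> n div (2 * m)"
proof (induction n)
  case 0 then show ?case by (simp add: Qc_def)
next
  case (Suc n)
  have "order (cis (pi / m)) (Qc (Suc n)) = order (cis (pi / m)) (Qc n) + order (cis (pi / m)) (1 - monom 1 (Suc n))"
    unfolding Qc_Suc by (rule order_mult) (metis Qc_Suc Qc_nz)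
  moreover have "Suc n div (2 * m) = n div (2 * m) + (if 2 * m dvd Suc n then 1 else 0)"
    by (simp add: div_Suc dvd_eq_mod_eq_0)
  ultimately show ?case using Suc order_factor[OF assms, of "Suc n"] by simp
qed

lemma dvd_factor:
  assumes "2 * m dvd i"
  shows "(1 + monom (1::int) m) dvd (1 - monom 1 i)"
proof -
  obtain k where i: "i = 2 * m * k" using assms by blast
  let ?x = "monom (1::int poly) m"
  have e: "monom (1::int) i = (monom 1 m ^ 2) ^ k"
    by (simp add: i monom_power power_mult mult.commute)
  have "(1 - monom 1 m ^ 2) dvd (1 - (monom (1::int) m ^ 2) ^ k)"
    by (metis dvd_triv_left one_diff_power_eq)
  moreover have "(1 + monom (1::int) m) dvd (1 - monom 1 m ^ 2)"
  proof (rule dvdI)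
    show "1 - monom 1 m ^ 2 = (1 + monom (1::int) m) * (1 - monom 1 m)"
      by (simp add: algebra_simps power2_eq_square)
  qed
  ultimately show ?thesis unfolding e using dvd_trans by blast
qed


lemma part1: "(1 + monom (1::int) m) ^ (n div (2 * m)) dvd qpoch n"
proof (induction n)
  case 0 then show ?case by simp
next
  case (Suc n)
  show ?case
  proof (cases "2 * m dvd Suc n")
    case True
    then have "Suc n div (2 * m) = Suc (n div (2 * m))"
      by (simp add: div_Suc dvd_eq_mod_eq_0)
    then show ?thesis unfolding qpoch_Suc
      using mult_dvd_mono[OF Suc dvd_factor[OF True]] by (simp add: mult.commute)
  next
    case False
    then have "Suc n div (2 * m) = n div (2 * m)"
      by (simp add: div_Suc dvd_eq_mod_eq_0)
    then show ?thesis unfolding qpoch_Suc using Suc by simp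
  qed
qed

theorem lemma4p4:
  fixes n m :: nat
  assumes "n \<ge> 1" and "m \<ge> 1"
  shows "(1 + monom 1 m) ^ (n div (2 * m)) dvd qpoch n \<and>
         \<not> (1 + monom 1 m) ^ (n div (2 * m) + 1) dvd qpoch n"
proof
  show "(1 + monom 1 m) ^ (n div (2 * m)) dvd qpoch n" by (rule part1)
  show "\<not> (1 + monom 1 m) ^ (n div (2 * m) + 1) dvd qpoch n"
  proof
    let ?z = "cis (pi / m)"
    let ?K = "n div (2 * m)"
    assume "(1 + monom 1 m) ^ (?K + 1) dvd qpoch n"
    then have "ci ((1 + monom 1 m) ^ (?K + 1)) dvd ci (qpoch n)" by (rule ci_dvd)
    then have d1: "(1 + monom 1 m) ^ (?K + 1) dvd Qc n"
      by (simp only: ci_power ci_add ci_monom ci_qpoch ci_one)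
    have "real m * (pi / real m) = pi" using assms(2) by simp
    then have "poly (1 + monom 1 m) ?z = 0"
      by (simp add: poly_monom DeMoivre)
    then have "[:-?z, 1:] dvd (1 + monom 1 m)" using poly_eq_0_iff_dvd by blast
    then have "[:-?z, 1:] ^ (?K + 1) dvd (1 + monom 1 m) ^ (?K + 1)" by (rule dvd_power_same)
    then have "[:-?z, 1:] ^ (?K + 1) dvd Qc n" using d1 by (rule dvd_trans)
    then have "?K + 1 \<le> order ?z (Qc n)" using Qc_nz[of n] order_divides by blast
    then show False using order_Qc[OF assms(2), of n] by simp
  qed
qed

end
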